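(* For any parent selection mechanism (applied to the set of points of maximum $\mathrm{L}$-value), the expected time for the modified GSEMO on \textsc{LOTZ} to reach the Pareto front (i.e. to have a Pareto-optimal point in its population) is $O(n^2)$.
   Context: Search space $\{0,1\}^n$; objectives maximised. $\textsc{LOTZ}(x)=(\mathrm{LO}(x),\mathrm{TZ}(x))$, $\mathrm{LO}$ = number of leading ones, $\mathrm{TZ}$ = number of trailing zeros. Dominance: $y$ dominates $x$ if $f_i(y)\ge f_i(x)$ for all $i$, strictly for some $i$; weakly dominates if $\ge$ in all. Pareto set $\{1^i0^{n-i}:0\le i\le n\}$. Modified GSEMO: let $\mathrm{L}(x)=\mathrm{LO}(x)+\mathrm{TZ}(x)$. Start with uniform random $s$, $P=\{s\}$. Each iteration: let $P'\subseteq P$ be the points with maximum $\mathrm{L}$-value; choose a parent $s\in P'$ by the parent selection mechanism (with any diversity scores computed w.r.t. $P'$); create $s'$ by flipping each bit independently with probability $1/n$; if $s'$ is not dominated by any member of $P$, add it and remove all members of $P$ weakly dominated by $s'$. Time = number of iterations. *)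

theory Defs
  imports "HOL-Probability.Probability"
begin

type_synonym bits = "bool list"

definition LO :: "bits \<Rightarrow> nat" where
  "LO x = length (takeWhile (\<lambda>b. b) x)"

definition TZ :: "bits \<Rightarrow> nat" where
  "TZ x = length (takeWhile (\<lambda>b. \<not> b) (rev x))"

definition Lval :: "bits \<Rightarrow> nat" where
  "Lval x = LO x + TZ x"

definition weakly_dominates :: "bits \<Rightarrow> bits \<Rightarrow> bool" where
  "weakly_dominates y x \<longleftrightarrow> LO y \<ge> LO x \<and> TZ y \<ge> TZ x"

definition dominates :: "bits \<Rightarrow> bits \<Rightarrow> bool" where
  "dominates y x \<longleftrightarrow> weakly_dominates y x \<and> (LO y > LO x \<or> TZ y > TZ x)"

definition pareto_optimal :: "nat \<Rightarrow> bits \<Rightarrow> bool" where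
  "pareto_optimal n x \<longleftrightarrow> length x = n \<and> \<not> (\<exists>y. length y = n \<and> dominates y x)"

fun mutate :: "real \<Rightarrow> bits \<Rightarrow> bits pmf" where
  "mutate p [] = return_pmf []"
| "mutate p (b # bs) =
     bind_pmf (bernoulli_pmf p) (\<lambda>f. bind_pmf (mutate p bs) (\<lambda>r. return_pmf ((if f then \<not> b else b) # r)))"

definition valid_selection :: "(bits set \<Rightarrow> bits pmf) \<Rightarrow> bool" where
  "valid_selection sel \<longleftrightarrow> (\<forall>Q. finite Q \<and> Q \<noteq> {} \<longrightarrow> set_pmf (sel Q) \<subseteq> Q)"

definition max_L_points :: "bits set \<Rightarrow> bits set" where
  "max_L_points P = {x \<in> P. Lval x = Max (Lval ` P)}"

definition update_pop :: "bits set \<Rightarrow> bits \<Rightarrow> bits set" where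
  "update_pop P s' =
     (if \<exists>y\<in>P. dominates y s' then P
      else insert s' {y \<in> P. \<not> weakly_dominates s' y})"

text \<open>One iteration of the modified GSEMO; made absorbing once the population
  contains a Pareto-optimal point (so that the probability of not being absorbed
  after t steps is the probability that the hitting time exceeds t).\<close>
definition gsemo_step :: "nat \<Rightarrow> (bits set \<Rightarrow> bits pmf) \<Rightarrow> bits set \<Rightarrow> bits set pmf" where
  "gsemo_step n sel P =
     (if \<exists>x\<in>P. pareto_optimal n x then return_pmf P
      else bind_pmf (sel (max_L_points P))
             (\<lambda>s. map_pmf (update_pop P) (mutate (1 / real n) s)))"

definition init_pop :: "nat \<Rightarrow> bits set pmf" where
  "init_pop n = map_pmf (\<lambda>s. {s}) (pmf_of_set {x. length x = n})"

fun pop_dist :: "nat \<Rightarrow> (bits set \<Rightarrow> bits pmf) \<Rightarrow> nat \<Rightarrow> bits set pmf" where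
  "pop_dist n sel 0 = init_pop n"
| "pop_dist n sel (Suc t) = bind_pmf (pop_dist n sel t) (gsemo_step n sel)"

text \<open>Expected hitting time E[T] = sum over t of Pr[T > t].\<close>
definition expected_time :: "nat \<Rightarrow> (bits set \<Rightarrow> bits pmf) \<Rightarrow> ennreal" where
  "expected_time n sel =
     (\<Sum>t. ennreal (measure_pmf.prob (pop_dist n sel t) {P. \<not> (\<exists>x\<in>P. pareto_optimal n x)}))"

end

theory Submission imports Defs begin

lemma LO_Nil[simp]: "LO [] = 0" by (simp add: LO_def)
lemma LO_Cons[simp]: "LO (a # x) = (if a then Suc (LO x) else 0)" by (simp add: LO_def)

lemma LO_ge: "m \<le> LO x \<longleftrightarrow> m \<le> length x \<and> (\<forall>i<m. x!i)"
proof (induction x arbitrary: m)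
  case Nil thus ?case by auto
next
  case (Cons a x)
  show ?case
  proof (cases m)
    case 0 thus ?thesis by simp
  next
    case (Suc m')
    thus ?thesis using Cons.IH[of m'] by (auto simp: less_Suc_eq_0_disj nth_Cons' split: if_splits)
  qed
qed

lemma TZ_LO: "TZ x = LO (map Not (rev x))"
  by (simp add: TZ_def LO_def takeWhile_map comp_def)

lemma TZ_ge: "m \<le> TZ x \<longleftrightarrow> m \<le> length x \<and> (\<forall>j. length x - m \<le> j \<and> j < length x \<longrightarrow> \<not> x!j)"
proof -
  have d1: "\<not> x ! j" if a: "m \<le> length x" "\<forall>i<m. \<not> rev x ! i" "length x - m \<le> j" "j < length x" for j
  proof -
    define i where "i = length x - Suc j"
    have i: "i < m" "i < length x" using a(1,3,4) by (auto simp: i_def)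
    have "length x - Suc i = j" using a(4) by (simp add: i_def)
    hence "rev x ! i = x ! j" using rev_nth[OF i(2)] by simp
    thus "\<not> x ! j" using a(2) i(1) by simp
  qed
  have d2: "\<not> rev x ! i" if a: "m \<le> length x" "\<forall>j. length x - m \<le> j \<and> j < length x \<longrightarrow> \<not> x ! j" "i < m" for i
  proof -
    have "length x - m \<le> length x - Suc i" "length x - Suc i < length x" using a(1,3) by arith+
    thus ?thesis using a(2) a(1,3) rev_nth[of i x] by auto
  qed
  have "m \<le> TZ x \<longleftrightarrow> m \<le> length x \<and> (\<forall>i<m. \<not> rev x ! i)"
    unfolding TZ_LO LO_ge by auto
  also have "\<dots> \<longleftrightarrow> m \<le> length x \<and> (\<forall>j. length x - m \<le> j \<and> j < length x \<longrightarrow> \<not> x!j)"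
    using d1 d2 by blast
  finally show ?thesis .
qed

lemma LO_le: "LO x \<le> length x" using LO_ge[of "LO x" x] by simp
lemma TZ_le: "TZ x \<le> length x" using TZ_ge[of "TZ x" x] by simp

lemma LO_TZ_le: "Lval x \<le> length x"
proof (rule ccontr)
  assume "\<not> ?thesis"
  hence h: "LO x + TZ x > length x" by (simp add: Lval_def)
  define j where "j = length x - TZ x"
  have "j < LO x" "j < length x" using h LO_le[of x] TZ_le[of x] by (auto simp: j_def)
  hence "x ! j" using LO_ge[of "LO x" x] by auto
  moreover have "\<not> x ! j" using TZ_ge[of "TZ x" x] \<open>j < length x\<close> by (auto simp: j_def)
  ultimately show False by simp
qed

lemma LO_nth: "LO x < length x \<Longrightarrow> \<not> x ! LO x"
  using LO_ge[of "Suc (LO x)" x] LO_ge[of "LO x" x] by (auto simp: less_Suc_eq)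

lemma flip_better:
  assumes "Lval s < length s"
  shows "Lval s < Lval (s[LO s := True])"
proof -
  let ?k = "LO s" and ?s' = "s[LO s := True]"
  have k: "?k + TZ s < length s" using assms by (simp add: Lval_def)
  have "Suc ?k \<le> LO ?s'"
    unfolding LO_ge using k LO_ge[of "LO s" s] by (auto simp: nth_list_update less_Suc_eq)
  moreover have "TZ s \<le> TZ ?s'"
    unfolding TZ_ge using k TZ_ge[of "TZ s" s] by (auto simp: nth_list_update)
  ultimately show ?thesis by (simp add: Lval_def)
qed

lemma flip_eq: "Lval s < length s \<Longrightarrow> s[LO s := True] = s[LO s := \<not> s ! LO s]"
  using LO_nth[of s] by (simp add: Lval_def)

lemma pareto_if: "length x = n \<Longrightarrow> Lval x = n \<Longrightarrow> pareto_optimal n x"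
  unfolding pareto_optimal_def
proof (intro conjI notI; (elim exE conjE)?)
  fix y assume "length y = n" "dominates y x" "Lval x = n"
  hence "Lval y > Lval x" by (auto simp: dominates_def weakly_dominates_def Lval_def)
  thus False using LO_TZ_le[of y] \<open>length y = n\<close> \<open>Lval x = n\<close> by simp
qed

lemma mutate_length: "ys \<in> set_pmf (mutate p xs) \<Longrightarrow> length ys = length xs"
  by (induction p xs arbitrary: ys rule: mutate.induct) auto

lemma pmf_map_Cons: "pmf (map_pmf ((#) c) M) (y # ys) = (if c = y then pmf M ys else 0)"
  by (auto simp: pmf_map vimage_def measure_pmf_single)

lemma pmf_map_Cons_Nil: "pmf (map_pmf ((#) c) M) [] = 0"
  by (auto simp: pmf_map vimage_def)

lemma pmf_mutate:
  assumes "0 \<le> p" "p \<le> 1"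
  shows "pmf (mutate p xs) ys = (if length ys = length xs then
           prod_list (map2 (\<lambda>a b. if a = b then 1 - p else p) xs ys) else 0)"
proof (induction xs arbitrary: ys)
  case Nil thus ?case by (auto simp: pmf_return)
next
  case (Cons b bs)
  have e: "\<And>c. bind_pmf (mutate p bs) (\<lambda>r. return_pmf (c # r)) = map_pmf ((#) c) (mutate p bs)"
    by (simp add: map_pmf_def)
  show ?case
  proof (cases ys)
    case Nil thus ?thesis using assms by (simp add: pmf_bind e pmf_map_Cons_Nil)
  next
    case (Cons y ys')
    thus ?thesis using assms Cons.IH[of ys'] by (auto simp add: pmf_bind e pmf_map_Cons)
  qed
qed

lemma prod_flip: fixes p :: real shows "j < length xs \<Longrightarrow>
  prod_list (map2 (\<lambda>a b. if a = b then 1 - p else p) xs (xs[j := \<not> xs ! j])) = p * (1 - p) ^ (length xs - 1)"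
proof (induction xs arbitrary: j)
  case Nil thus ?case by simp
next
  case (Cons a xs)
  show ?case
  proof (cases j)
    case 0
    have "prod_list (map2 (\<lambda>a b. if a = b then 1 - p else p) xs xs) = (1 - p) ^ length xs"
      by (induction xs) auto
    thus ?thesis using 0 by simp
  next
    case (Suc j')
    hence "j' < length xs" using Cons.prems by simp
    hence "(1-p)^length xs = (1-p)*(1-p)^(length xs - 1)" by (cases "length xs") auto
    thus ?thesis using Cons.IH[OF \<open>j' < length xs\<close>] Suc
      by (simp add: mult_ac)
  qed
qed

lemma const_bound:
  assumes "n \<ge> (1::nat)"
  shows "(1 - 1 / real n) ^ (n - 1) \<ge> 1 / 3"
proof (cases "n = 1")
  case True thus ?thesis by simp
next
  case False
  define m where "m = n - 1"
  have m: "real m > 0" "real n = real m + 1" using False assms by (auto simp: m_def)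
  have "(1 + 1 / real m) ^ m \<le> exp (1 / real m) ^ m"
    by (rule power_mono) (auto simp: add.commute)
  also have "\<dots> = exp 1" using m by (simp flip: exp_of_nat_mult)
  also have "\<dots> \<le> 3" by (rule exp_le)
  finally have h: "(1 + 1 / real m) ^ m \<le> 3" .
  have mm: "real m + real m * real m \<noteq> 0" using mult_pos_pos[OF m(1) m(1)] m(1) by linarith
  have "(1 - 1 / real n) * (1 + 1 / real m) = 1" using m mm by (simp add: field_simps)
  hence key: "(1 - 1 / real n) ^ m * (1 + 1 / real m) ^ m = 1" by (metis power_mult_distrib power_one)
  have pos: "(1 + 1 / real m) ^ m > 0" using m(1) by (intro zero_less_power) (auto intro: add_pos_nonneg)
  have eq: "(1 - 1 / real n) ^ m = 1 / (1 + 1 / real m) ^ m"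
    by (rule eq_divide_imp[OF _ key]) (use pos in linarith)
  have r: "1/3 \<le> 1 / (1 + 1 / real m) ^ m" by (rule frac_le[OF _ _ pos h]) simp_all
  have "1/3 \<le> (1 - 1 / real n) ^ m" using r by (simp only: eq)
  moreover have "m = n - 1" by (rule m_def)
  ultimately show ?thesis by simp
qed


definition popinv :: "nat \<Rightarrow> bits set \<Rightarrow> bool" where
  "popinv n P \<longleftrightarrow> finite P \<and> P \<noteq> {} \<and> (\<forall>x\<in>P. length x = n)"
definition absb :: "nat \<Rightarrow> bits set \<Rightarrow> bool" where
  "absb n P \<longleftrightarrow> (\<exists>x\<in>P. pareto_optimal n x)"
definition mL :: "bits set \<Rightarrow> nat" where
  "mL P = Max (Lval ` P)"

lemma mL_ge: "popinv n P \<Longrightarrow> x \<in> P \<Longrightarrow> Lval x \<le> mL P"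
  unfolding popinv_def mL_def by (intro Max_ge) auto

lemma mL_in: "popinv n P \<Longrightarrow> \<exists>x\<in>P. Lval x = mL P"
proof -
  assume "popinv n P"
  hence "mL P \<in> Lval ` P" unfolding popinv_def mL_def by (intro Max_in) auto
  thus ?thesis by auto
qed

lemma mL_lt: "popinv n P \<Longrightarrow> \<not> absb n P \<Longrightarrow> mL P < n"
proof -
  assume a: "popinv n P" "\<not> absb n P"
  obtain x where x: "x \<in> P" "Lval x = mL P" using mL_in[OF a(1)] by blast
  have l: "length x = n" using a(1) x(1) by (auto simp: popinv_def)
  have "Lval x \<le> n" using LO_TZ_le[of x] l by simp
  moreover have "Lval x \<noteq> n" using pareto_if[OF l] a(2) x(1) by (auto simp: absb_def)
  ultimately show ?thesis using x(2) by simp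
qed

lemma update_inv: "popinv n P \<Longrightarrow> length s = n \<Longrightarrow> popinv n (update_pop P s)"
  unfolding popinv_def update_pop_def by auto

lemma update_keep: "x \<in> P \<Longrightarrow> \<exists>y\<in>update_pop P s. Lval x \<le> Lval y"
proof (cases "\<exists>y\<in>P. dominates y s")
  case True
  assume "x \<in> P"
  thus ?thesis using True unfolding update_pop_def by auto
next
  case False
  assume x: "x \<in> P"
  show ?thesis
  proof (cases "weakly_dominates s x")
    case True
    hence "Lval x \<le> Lval s" by (simp add: weakly_dominates_def Lval_def)
    moreover have "s \<in> update_pop P s" using False unfolding update_pop_def by simp
    ultimately show ?thesis by blast
  next
    case False': False
    hence "x \<in> update_pop P s" using False x unfolding update_pop_def by simp
    thus ?thesis by blast
  qed
qed

lemma update_new: "popinv n P \<Longrightarrow> mL P < Lval s \<Longrightarrow> s \<in> update_pop P s"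
proof -
  assume a: "popinv n P" "mL P < Lval s"
  have "\<not> (\<exists>y\<in>P. dominates y s)"
  proof
    assume "\<exists>y\<in>P. dominates y s"
    then obtain y where "y \<in> P" "dominates y s" by blast
    hence "Lval s \<le> Lval y" "Lval y \<le> mL P" using mL_ge[OF a(1)]
      by (auto simp: dominates_def weakly_dominates_def Lval_def)
    thus False using a(2) by simp
  qed
  thus ?thesis unfolding update_pop_def by simp
qed

lemma mL_mono: "popinv n P \<Longrightarrow> popinv n P' \<Longrightarrow> (\<forall>x\<in>P. \<exists>y\<in>P'. Lval x \<le> Lval y) \<Longrightarrow> mL P \<le> mL P'"
proof -
  assume a: "popinv n P" "popinv n P'" "\<forall>x\<in>P. \<exists>y\<in>P'. Lval x \<le> Lval y"
  obtain x where x: "x \<in> P" "Lval x = mL P" using mL_in[OF a(1)] by blast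
  obtain y where y: "y \<in> P'" "Lval x \<le> Lval y" using a(3) x(1) by blast
  show ?thesis using mL_ge[OF a(2) y(1)] x(2) y(2) by simp
qed

lemma maxpts: "popinv n P \<Longrightarrow> finite (max_L_points P) \<and> max_L_points P \<noteq> {}
   \<and> max_L_points P \<subseteq> P \<and> (\<forall>x\<in>max_L_points P. Lval x = mL P)"
proof -
  assume a: "popinv n P"
  obtain x where x: "x \<in> P" "Lval x = mL P" using mL_in[OF a] by blast
  have "x \<in> max_L_points P" using x unfolding max_L_points_def mL_def by simp
  moreover have "finite (max_L_points P)" using a unfolding popinv_def max_L_points_def by simp
  ultimately show ?thesis unfolding max_L_points_def mL_def by blast
qed

lemma step_supp:
  assumes "popinv n P" "valid_selection sel" "P' \<in> set_pmf (gsemo_step n sel P)"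
  shows "popinv n P' \<and> mL P \<le> mL P'"
proof (cases "absb n P")
  case True
  hence "P' = P" using assms(3) by (auto simp: gsemo_step_def absb_def)
  thus ?thesis using assms(1) by simp
next
  case False
  let ?Q = "max_L_points P"
  obtain s s' where s: "s \<in> set_pmf (sel ?Q)" "s' \<in> set_pmf (mutate (1 / real n) s)"
    "P' = update_pop P s'"
    using assms(3) False by (auto simp: gsemo_step_def absb_def)
  have "s \<in> ?Q" using s(1) maxpts[OF assms(1)] assms(2) unfolding valid_selection_def by blast
  hence "length s = n" using maxpts[OF assms(1)] assms(1) unfolding popinv_def by blast
  hence l: "length s' = n" using mutate_length[OF s(2)] by simp
  have inv: "popinv n P'" using update_inv[OF assms(1) l] s(3) by simp
  show ?thesis using inv mL_mono[OF assms(1) inv] update_keep s(3) by blast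
qed

lemma pop_inv: "valid_selection sel \<Longrightarrow> P \<in> set_pmf (pop_dist n sel t) \<Longrightarrow> popinv n P"
proof (induction t arbitrary: P)
  case 0
  have fin: "finite {x :: bits. length x = n}"
    by (rule finite_subset[OF _ finite_lists_length_eq[of UNIV n]]) auto
  have ne: "{x :: bits. length x = n} \<noteq> {}" by (auto intro: exI[of _ "replicate n True"])
  show ?case using 0 fin ne by (auto simp: init_pop_def popinv_def)
next
  case (Suc t)
  then obtain P0 where "P0 \<in> set_pmf (pop_dist n sel t)" "P \<in> set_pmf (gsemo_step n sel P0)" by auto
  thus ?case using Suc step_supp by blast
qed

definition gpot :: "nat \<Rightarrow> bits set \<Rightarrow> ennreal" where
  "gpot n P = (if absb n P then 0 else of_nat ((n - mL P) * (3 * n)))"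

lemma progress:
  assumes n: "n \<ge> 1" and inv: "popinv n P" and na: "\<not> absb n P" and sel: "valid_selection sel"
  shows "emeasure (measure_pmf (gsemo_step n sel P)) {P'. mL P < mL P'} \<ge> ennreal (1 / (3 * real n))"
proof -
  let ?Q = "max_L_points P" and ?p = "1 / real n" and ?B = "{P'. mL P < mL P'}"
  have st: "gsemo_step n sel P = bind_pmf (sel ?Q) (\<lambda>s. map_pmf (update_pop P) (mutate ?p s))"
    using na by (simp add: gsemo_step_def absb_def)
  have pt: "emeasure (measure_pmf (map_pmf (update_pop P) (mutate ?p s))) ?B \<ge> ennreal (1 / (3 * real n))"
    if s: "s \<in> set_pmf (sel ?Q)" for s
  proof -
    have "s \<in> ?Q" using s maxpts[OF inv] sel unfolding valid_selection_def by blast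
    hence ls: "length s = n" and Ls: "Lval s = mL P" using maxpts[OF inv] inv unfolding popinv_def by blast+
    have lt: "Lval s < length s" using Ls ls mL_lt[OF inv na] by simp
    define s' where "s' = s[LO s := True]"
    have better: "mL P < Lval s'" using flip_better[OF lt] Ls by (simp add: s'_def)
    have ls': "length s' = n" using ls by (simp add: s'_def)
    have inv': "popinv n (update_pop P s')" using update_inv[OF inv ls'] .
    have "s' \<in> update_pop P s'" using update_new[OF inv better] .
    hence "Lval s' \<le> mL (update_pop P s')" using mL_ge[OF inv'] by blast
    hence inB: "s' \<in> update_pop P -` ?B" using better by simp
    have lo: "LO s < length s" using lt by (simp add: Lval_def)
    have "pmf (mutate ?p s) s' = ?p * (1 - ?p) ^ (n - 1)"
      using n ls pmf_mutate[of ?p s s'] prod_flip[OF lo, of ?p] flip_eq[OF lt]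
      by (simp add: s'_def)
    also have "\<dots> \<ge> ?p * (1/3)"
      using const_bound[OF n] by (intro mult_left_mono) auto
    finally have pm: "pmf (mutate ?p s) s' \<ge> 1 / (3 * real n)" by simp
    have "ennreal (1 / (3 * real n)) \<le> ennreal (pmf (mutate ?p s) s')"
      using pm by (rule ennreal_leI)
    also have "\<dots> = emeasure (measure_pmf (mutate ?p s)) {s'}" by (simp add: emeasure_pmf_single)
    also have "\<dots> \<le> emeasure (measure_pmf (mutate ?p s)) (update_pop P -` ?B)"
      using inB by (intro emeasure_mono) auto
    also have "\<dots> = emeasure (measure_pmf (map_pmf (update_pop P) (mutate ?p s))) ?B"
      by (simp add: emeasure_map_pmf)
    finally show ?thesis .
  qed
  have "ennreal (1 / (3 * real n)) = (\<integral>\<^sup>+s. ennreal (1 / (3 * real n)) \<partial>measure_pmf (sel ?Q))"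
    by (simp add: measure_pmf.emeasure_space_1)
  also have "\<dots> \<le> (\<integral>\<^sup>+s. emeasure (measure_pmf (map_pmf (update_pop P) (mutate ?p s))) ?B \<partial>measure_pmf (sel ?Q))"
    by (intro nn_integral_mono_AE AE_pmfI pt)
  also have "\<dots> = emeasure (measure_pmf (gsemo_step n sel P)) ?B"
    unfolding st by simp
  finally show ?thesis .
qed

lemma drift:
  assumes n: "n \<ge> 1" and inv: "popinv n P" and sel: "valid_selection sel"
  shows "(\<integral>\<^sup>+P'. gpot n P' \<partial>measure_pmf (gsemo_step n sel P)) + indicator {P. \<not> absb n P} P \<le> gpot n P"
proof (cases "absb n P")
  case True
  hence "gsemo_step n sel P = return_pmf P" by (simp add: gsemo_step_def absb_def)
  thus ?thesis using True by simp
next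
  case False
  define k where "k = mL P"
  have kn: "k < n" using mL_lt[OF inv False] by (simp add: k_def)
  let ?N = "measure_pmf (gsemo_step n sel P)" and ?B = "{P'. mL P < mL P'}"
  let ?C = "of_nat ((n - k) * (3 * n)) :: ennreal"
  have pt: "gpot n P' + of_nat (3 * n) * indicator ?B P' \<le> ?C" if P': "P' \<in> set_pmf (gsemo_step n sel P)" for P'
  proof -
    have mono: "k \<le> mL P'" using step_supp[OF inv sel P'] by (simp add: k_def)
    have g: "gpot n P' \<le> of_nat ((n - mL P') * (3 * n))" by (simp add: gpot_def)
    show ?thesis
    proof (cases "P' \<in> ?B")
      case True
      hence mm: "Suc k \<le> mL P'" by (simp add: k_def)
      have "(n - mL P') + 1 \<le> n - k" using mm kn by arith
      hence "((n - mL P') + 1) * (3 * n) \<le> (n - k) * (3 * n)" by (rule mult_right_mono) simp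
      hence "(n - mL P') * (3 * n) + 3 * n \<le> (n - k) * (3 * n)" by (simp add: algebra_simps)
      hence "(of_nat ((n - mL P') * (3 * n) + 3 * n) :: ennreal) \<le> ?C" by (rule of_nat_mono)
      hence c1: "of_nat ((n - mL P') * (3 * n)) + of_nat (3 * n) \<le> ?C" by simp
      have c2: "gpot n P' + of_nat (3 * n) \<le> of_nat ((n - mL P') * (3 * n)) + of_nat (3 * n)"
        using g by (rule add_right_mono)
      have ind: "of_nat (3 * n) * indicator ?B P' = (of_nat (3 * n) :: ennreal)" using True by simp
      show ?thesis unfolding ind using c2 c1 by (rule order_trans)
    next
      case False
      have "(n - mL P') * (3 * n) \<le> (n - k) * (3 * n)" using mono by (intro mult_right_mono) auto
      hence "(of_nat ((n - mL P') * (3 * n)) :: ennreal) \<le> ?C" by (rule of_nat_mono)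
      moreover have "indicator ?B P' = (0::ennreal)" using False by simp
      ultimately show ?thesis using g by simp
    qed
  qed
  have "(\<integral>\<^sup>+P'. gpot n P' \<partial>?N) + of_nat (3 * n) * emeasure ?N ?B
      = (\<integral>\<^sup>+P'. gpot n P' + of_nat (3 * n) * indicator ?B P' \<partial>?N)"
    by (simp add: nn_integral_add nn_integral_cmult)
  also have "\<dots> \<le> (\<integral>\<^sup>+P'. ?C \<partial>?N)"
    by (intro nn_integral_mono_AE AE_pmfI pt)
  also have "\<dots> = ?C" by (simp add: measure_pmf.emeasure_space_1)
  finally have a: "(\<integral>\<^sup>+P'. gpot n P' \<partial>?N) + of_nat (3 * n) * emeasure ?N ?B \<le> ?C" .
  have "1 = of_nat (3 * n) * ennreal (1 / (3 * real n))"
    using n by (simp add: ennreal_of_nat_eq_real_of_nat flip: ennreal_mult)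
  also have "\<dots> \<le> of_nat (3 * n) * emeasure ?N ?B"
    by (intro mult_left_mono progress[OF n inv False sel]) auto
  finally have b: "1 \<le> of_nat (3 * n) * emeasure ?N ?B" .
  have "(\<integral>\<^sup>+P'. gpot n P' \<partial>?N) + indicator {P. \<not> absb n P} P = (\<integral>\<^sup>+P'. gpot n P' \<partial>?N) + 1"
    using False by simp
  also have "\<dots> \<le> (\<integral>\<^sup>+P'. gpot n P' \<partial>?N) + of_nat (3 * n) * emeasure ?N ?B"
    using b by (rule add_left_mono)
  also have "\<dots> \<le> ?C" by (rule a)
  also have "\<dots> = gpot n P" using False by (simp add: gpot_def k_def)
  finally show ?thesis .
qed

definition aa :: "nat \<Rightarrow> (bits set \<Rightarrow> bits pmf) \<Rightarrow> nat \<Rightarrow> ennreal" where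
  "aa n sel t = (\<integral>\<^sup>+P. gpot n P \<partial>measure_pmf (pop_dist n sel t))"
definition bb :: "nat \<Rightarrow> (bits set \<Rightarrow> bits pmf) \<Rightarrow> nat \<Rightarrow> ennreal" where
  "bb n sel t = emeasure (measure_pmf (pop_dist n sel t)) {P. \<not> absb n P}"

lemma step_ineq:
  assumes n: "n \<ge> 1" and sel: "valid_selection sel"
  shows "aa n sel (Suc t) + bb n sel t \<le> aa n sel t"
proof -
  let ?M = "measure_pmf (pop_dist n sel t)"
  have "aa n sel (Suc t) + bb n sel t =
     (\<integral>\<^sup>+P. (\<integral>\<^sup>+P'. gpot n P' \<partial>measure_pmf (gsemo_step n sel P)) \<partial>?M)
     + (\<integral>\<^sup>+P. indicator {P. \<not> absb n P} P \<partial>?M)"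
    by (simp add: aa_def bb_def)
  also have "\<dots> = (\<integral>\<^sup>+P. (\<integral>\<^sup>+P'. gpot n P' \<partial>measure_pmf (gsemo_step n sel P)) + indicator {P. \<not> absb n P} P \<partial>?M)"
    by (simp add: nn_integral_add)
  also have "\<dots> \<le> (\<integral>\<^sup>+P. gpot n P \<partial>?M)"
    by (intro nn_integral_mono_AE AE_pmfI drift[OF n _ sel] pop_inv[OF sel])
  finally show ?thesis by (simp add: aa_def)
qed

lemma telesc:
  assumes n: "n \<ge> 1" and sel: "valid_selection sel"
  shows "aa n sel T + (\<Sum>t<T. bb n sel t) \<le> aa n sel 0"
proof (induction T)
  case 0 thus ?case by simp
next
  case (Suc T)
  have "aa n sel (Suc T) + (\<Sum>t<Suc T. bb n sel t) = (aa n sel (Suc T) + bb n sel T) + (\<Sum>t<T. bb n sel t)"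
    by (simp add: ac_simps)
  also have "\<dots> \<le> aa n sel T + (\<Sum>t<T. bb n sel t)"
    by (intro add_right_mono step_ineq[OF n sel])
  also have "\<dots> \<le> aa n sel 0" by (rule Suc.IH)
  finally show ?case .
qed

lemma aa0: "aa n sel 0 \<le> of_nat (n * (3 * n))"
proof -
  have "aa n sel 0 \<le> (\<integral>\<^sup>+P. of_nat (n * (3 * n)) \<partial>measure_pmf (pop_dist n sel 0))"
    unfolding aa_def
  proof (intro nn_integral_mono)
    fix P
    have "(n - mL P) * (3 * n) \<le> n * (3 * n)" by simp
    hence "(of_nat ((n - mL P) * (3 * n)) :: ennreal) \<le> of_nat (n * (3 * n))" by (metis of_nat_le_iff)
    thus "gpot n P \<le> of_nat (n * (3 * n))" by (simp add: gpot_def)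
  qed
  also have "\<dots> = of_nat (n * (3 * n))" by (simp add: measure_pmf.emeasure_space_1)
  finally show ?thesis .
qed

theorem lemma7:
  shows "\<exists>c::real. c > 0 \<and>
    (\<forall>n::nat. n \<ge> 1 \<longrightarrow> (\<forall>sel. valid_selection sel \<longrightarrow>
        expected_time n sel \<le> ennreal (c * real n ^ 2)))"
proof (intro exI[of _ 3] conjI allI impI)
  fix n :: nat and sel assume n: "n \<ge> 1" and sel: "valid_selection sel"
  have "expected_time n sel = (\<Sum>t. bb n sel t)"
    unfolding expected_time_def bb_def by (simp add: measure_pmf.emeasure_eq_measure absb_def)
  also have "\<dots> \<le> of_nat (n * (3 * n))"
  proof (rule suminf_le_const[OF summableI])
    fix T
    have "(\<Sum>t<T. bb n sel t) \<le> aa n sel T + (\<Sum>t<T. bb n sel t)" by (intro add_increasing) auto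
    also have "\<dots> \<le> aa n sel 0" by (rule telesc[OF n sel])
    also have "\<dots> \<le> of_nat (n * (3 * n))" by (rule aa0)
    finally show "(\<Sum>t<T. bb n sel t) \<le> of_nat (n * (3 * n))" .
  qed
  also have "\<dots> = ennreal (3 * real n ^ 2)"
  proof -
    have e: "real (n * (3 * n)) = 3 * real n ^ 2" by (simp add: power2_eq_square)
    show ?thesis by (subst ennreal_of_nat_eq_real_of_nat) (simp only: e)
  qed
  finally show "expected_time n sel \<le> ennreal (3 * real n ^ 2)" .
qed simp

end
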